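(* Let $p, q$ be integers with $p, q \ge 2$. Then for every $\lambda \in \Lambda^{p,q}_{+}$, \[ \mathcal{F}(\lambda; \Lambda^{p,q}) \simeq \begin{cases} \mathcal{F}(T^{p,q}_{2,2}(\lambda); \Lambda^{2,2}) & \text{if } \lambda \in \operatorname{Fix}(T^{2,2}_{p,q} \circ T^{p,q}_{2,2}),\\ \mathrm{pt} & \text{otherwise,} \end{cases} \] where $\simeq$ denotes homotopy equivalence and $\mathrm{pt}$ the one-point space.
   Context: $\mathbb{N}=\{0,1,2,\dots\}$. For an additive commutative monoid $\Lambda$ that is cancellative and has no non-trivial invertible elements, define the partial order $\lambda \le \mu$ iff there is $\nu\in\Lambda$ with $\lambda+\nu=\mu$; write $\lambda<\mu$ for $\lambda\le\mu$, $\lambda\ne\mu$. Let $\Lambda_+=\Lambda\setminus\{0\}$. For a poset $P$, $|P|$ denotes the geometric realization of its order complex (simplices are the finite nonempty chains), and $(x,y)_P=\{z\in P: x<z<y\}$. The Frobenius complex is $\mathcal{F}(\lambda;\Lambda)=|(0,\lambda)_\Lambda|$ for $\lambda\in\Lambda_+$. For positive integers $p,q$, $\Lambda^{p,q}=\langle a,b\mid pa=qb\rangle$ is the quotient of the free commutative monoid $\mathbb{N}a\oplus\mathbb{N}b$ by the congruence generated by $\lambda+pa\sim\lambda+qb$ ($\lambda\in\mathbb{N}a\oplus\mathbb{N}b$). For positive integers $p,q$, the transition function $\tau^p_q:\mathbb{N}\to\mathbb{N}$ is $\tau^p_q(mp+n)=mq+\min\{n,q-1\}$ for $m\in\mathbb{N}$,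 $0\le n<p$. For positive integers $p,q,r,s$, the transition map $T^{p,q}_{r,s}:\Lambda^{p,q}\to\Lambda^{r,s}$ is $T^{p,q}_{r,s}(ma+nb)=\tau^p_r(m)a+\tau^q_s(n)b$ ($m,n\in\mathbb{N}$). For a function $f$ on a set $X$, $\operatorname{Fix} f=\{x\in X: f(x)=x\}$. *)

theory Defs
  imports "HOL-Analysis.Analysis"
begin

text \<open>A poset is given by a carrier set P and a strict order lt on it.
  Simplices of the order complex are the finite nonempty chains. The geometric
  realization is the set of barycentric coordinate functions f : 'a => real
  (nonnegative, with support a finite nonempty chain of P, summing to 1),
  topologised as a subspace of the product topology. For the finite posets
  occurring below, this coincides with the usual (weak) topology.\<close>

definition fin_chain :: "'a set \<Rightarrow> ('a \<Rightarrow> 'a \<Rightarrow> bool) \<Rightarrow> 'a set \<Rightarrow> bool" where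
  "fin_chain P lt S \<longleftrightarrow> S \<subseteq> P \<and> S \<noteq> {} \<and> finite S \<and>
     (\<forall>x\<in>S. \<forall>y\<in>S. x = y \<or> lt x y \<or> lt y x)"

definition order_complex_realization :: "'a set \<Rightarrow> ('a \<Rightarrow> 'a \<Rightarrow> bool) \<Rightarrow> ('a \<Rightarrow> real) topology" where
  "order_complex_realization P lt =
     subtopology (powertop_real UNIV)
       {f. (\<forall>x. 0 \<le> f x) \<and> fin_chain P lt {x. f x \<noteq> 0} \<and> sum f {x. f x \<noteq> 0} = 1}"

text \<open>Elements m a + n b of the free commutative monoid N a + N b are pairs (m,n).\<close>

definition padd :: "nat \<times> nat \<Rightarrow> nat \<times> nat \<Rightarrow> nat \<times> nat" where
  "padd x y = (fst x + fst y, snd x + snd y)"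

definition gen_rel :: "nat \<Rightarrow> nat \<Rightarrow> nat \<times> nat \<Rightarrow> nat \<times> nat \<Rightarrow> bool" where
  "gen_rel p q x y \<longleftrightarrow> (\<exists>l. x = padd l (p, 0) \<and> y = padd l (0, q))"

text \<open>The congruence generated (the generating relation is translation-invariant,
  so its equivalence closure is already a congruence).\<close>
definition lcong :: "nat \<Rightarrow> nat \<Rightarrow> nat \<times> nat \<Rightarrow> nat \<times> nat \<Rightarrow> bool" where
  "lcong p q = equivclp (gen_rel p q)"

definition lcls :: "nat \<Rightarrow> nat \<Rightarrow> nat \<times> nat \<Rightarrow> (nat \<times> nat) set" where
  "lcls p q x = {y. lcong p q x y}"

definition Lam :: "nat \<Rightarrow> nat \<Rightarrow> (nat \<times> nat) set set" where
  "Lam p q = range (lcls p q)"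

definition lzero :: "nat \<Rightarrow> nat \<Rightarrow> (nat \<times> nat) set" where
  "lzero p q = lcls p q (0, 0)"

definition ladd :: "nat \<Rightarrow> nat \<Rightarrow> (nat \<times> nat) set \<Rightarrow> (nat \<times> nat) set \<Rightarrow> (nat \<times> nat) set" where
  "ladd p q X Y = {z. \<exists>x\<in>X. \<exists>y\<in>Y. lcong p q (padd x y) z}"

definition lle :: "nat \<Rightarrow> nat \<Rightarrow> (nat \<times> nat) set \<Rightarrow> (nat \<times> nat) set \<Rightarrow> bool" where
  "lle p q X Y \<longleftrightarrow> (\<exists>N\<in>Lam p q. ladd p q X N = Y)"

definition lless :: "nat \<Rightarrow> nat \<Rightarrow> (nat \<times> nat) set \<Rightarrow> (nat \<times> nat) set \<Rightarrow> bool" where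
  "lless p q X Y \<longleftrightarrow> lle p q X Y \<and> X \<noteq> Y"

definition lopen :: "nat \<Rightarrow> nat \<Rightarrow> (nat \<times> nat) set \<Rightarrow> (nat \<times> nat) set \<Rightarrow> (nat \<times> nat) set set" where
  "lopen p q X Y = {Z \<in> Lam p q. lless p q X Z \<and> lless p q Z Y}"

definition frobenius_complex :: "nat \<Rightarrow> nat \<Rightarrow> (nat \<times> nat) set \<Rightarrow> ((nat \<times> nat) set \<Rightarrow> real) topology" where
  "frobenius_complex p q L = order_complex_realization (lopen p q (lzero p q) L) (lless p q)"

definition tau :: "nat \<Rightarrow> nat \<Rightarrow> nat \<Rightarrow> nat" where
  "tau p q k = (k div p) * q + min (k mod p) (q - 1)"

text \<open>T^{p,q}_{r,s}(m a + n b) = tau^p_r(m) a + tau^q_s(n) b, computed on any representative.\<close>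
definition trans_map :: "nat \<Rightarrow> nat \<Rightarrow> nat \<Rightarrow> nat \<Rightarrow> (nat \<times> nat) set \<Rightarrow> (nat \<times> nat) set" where
  "trans_map p q r s X = (let x = (SOME x. x \<in> X) in lcls r s (tau p r (fst x), tau q s (snd x)))"

end

theory Submission
  imports Defs
begin


definition RS :: "'a set \<Rightarrow> ('a \<Rightarrow> 'a \<Rightarrow> bool) \<Rightarrow> ('a \<Rightarrow> real) set" where
  "RS P lt = {f. (\<forall>x. 0 \<le> f x) \<and> fin_chain P lt {x. f x \<noteq> 0} \<and> sum f {x. f x \<noteq> 0} = 1}"

lemma topspace_ocr: "topspace (order_complex_realization P lt) = RS P lt"
  by (simp add: order_complex_realization_def RS_def)

lemma RS_zero: "w \<in> RS P lt \<Longrightarrow> x \<notin> P \<Longrightarrow> w x = 0"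
  by (auto simp: RS_def fin_chain_def)

lemma RS_nonneg: "w \<in> RS P lt \<Longrightarrow> 0 \<le> w x"
  by (auto simp: RS_def)

lemma RS_sum: assumes "finite P" "w \<in> RS P lt" shows "sum w P = 1"
proof -
  have "{x. w x \<noteq> 0} \<subseteq> P" using assms by (auto simp: RS_def fin_chain_def)
  then have "sum w P = sum w {x. w x \<noteq> 0}"
    by (intro sum.mono_neutral_right) (use assms in auto)
  then show ?thesis using assms by (simp add: RS_def)
qed

lemma RS_chain: "w \<in> RS P lt \<Longrightarrow> w x \<noteq> 0 \<Longrightarrow> w y \<noteq> 0 \<Longrightarrow> x = y \<or> lt x y \<or> lt y x"
  by (auto simp: RS_def fin_chain_def)

lemma RS_in: "w \<in> RS P lt \<Longrightarrow> w x \<noteq> 0 \<Longrightarrow> x \<in> P"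
  by (auto simp: RS_def fin_chain_def)

lemma RS_intro:
  assumes fin: "finite V" and nn: "\<And>x. 0 \<le> w x" and sub: "\<And>x. w x \<noteq> 0 \<Longrightarrow> x \<in> V"
    and VP: "V \<subseteq> P" and s: "sum w V = 1"
    and ch: "\<And>x y. w x \<noteq> 0 \<Longrightarrow> w y \<noteq> 0 \<Longrightarrow> x = y \<or> lt x y \<or> lt y x"
  shows "w \<in> RS P lt"
proof -
  have S: "{x. w x \<noteq> 0} \<subseteq> V" using sub by auto
  have "sum w {x. w x \<noteq> 0} = sum w V"
    by (intro sum.mono_neutral_left fin S) auto
  with s have s1: "sum w {x. w x \<noteq> 0} = 1" by simp
  have "{x. w x \<noteq> 0} \<noteq> {}" using s1 by (metis sum.empty zero_neq_one)
  moreover have "finite {x. w x \<noteq> 0}" using fin S finite_subset by blast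
  ultimately show ?thesis using s1 nn S VP ch by (auto simp: RS_def fin_chain_def)
qed

definition push :: "'a set \<Rightarrow> ('a \<Rightarrow> 'b) \<Rightarrow> ('a \<Rightarrow> real) \<Rightarrow> ('b \<Rightarrow> real)" where
  "push P f w = (\<lambda>v. sum w {x\<in>P. f x = v})"

definition monoP :: "'a set \<Rightarrow> ('a \<Rightarrow> 'a \<Rightarrow> bool) \<Rightarrow> ('b \<Rightarrow> 'b \<Rightarrow> bool) \<Rightarrow> ('a \<Rightarrow> 'b) \<Rightarrow> bool" where
  "monoP P lt lt' f \<longleftrightarrow> (\<forall>x\<in>P. \<forall>y\<in>P. lt x y \<longrightarrow> f x = f y \<or> lt' (f x) (f y))"

lemma sum_nz_ex: "sum w A \<noteq> 0 \<Longrightarrow> \<exists>x\<in>A. w x \<noteq> (0::real)"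
  by (meson sum.neutral)

lemma push_RS:
  assumes fin: "finite P" and fQ: "f ` P \<subseteq> Q" and mf: "monoP P lt lt' f" and w: "w \<in> RS P lt"
  shows "push P f w \<in> RS Q lt'"
proof (rule RS_intro[where V="f ` P"])
  show "finite (f ` P)" using fin by simp
  show "0 \<le> push P f w x" for x unfolding push_def using w by (intro sum_nonneg) (auto simp: RS_nonneg)
  show "push P f w x \<noteq> 0 \<Longrightarrow> x \<in> f ` P" for x unfolding push_def
    by (auto dest!: sum_nz_ex)
  show "f ` P \<subseteq> Q" by fact
  show "sum (push P f w) (f ` P) = 1" unfolding push_def
    using sum.group[OF fin finite_imageI[OF fin], where g=f and h=w] RS_sum[OF fin w] by simp
  show "x = y \<or> lt' x y \<or> lt' y x" if px: "push P f w x \<noteq> 0" and py: "push P f w y \<noteq> 0" for x y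
  proof -
    obtain a where a: "a \<in> P" "f a = x" "w a \<noteq> 0" using sum_nz_ex[OF px[unfolded push_def]] by auto
    obtain b where b: "b \<in> P" "f b = y" "w b \<noteq> 0" using sum_nz_ex[OF py[unfolded push_def]] by auto
    have "a = b \<or> lt a b \<or> lt b a" using RS_chain[OF w a(3) b(3)] .
    then show ?thesis using mf a b unfolding monoP_def by metis
  qed
qed

lemma cont_proj_sub: "continuous_map (subtopology (powertop_real UNIV) S) euclideanreal (\<lambda>w. w x)"
  by (intro continuous_intros) auto

lemma push_cont:
  assumes fin: "finite P" and fQ: "f ` P \<subseteq> Q" and mf: "monoP P lt lt' f"
  shows "continuous_map (order_complex_realization P lt) (order_complex_realization Q lt') (push P f)"
proof -
  have "continuous_map (order_complex_realization P lt) (powertop_real UNIV) (push P f)"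
    unfolding continuous_map_componentwise_UNIV push_def order_complex_realization_def
    by (intro allI continuous_map_sum cont_proj_sub) (auto intro: finite_subset[OF _ fin])
  moreover have "push P f ` topspace (order_complex_realization P lt) \<subseteq> RS Q lt'"
    using push_RS[OF fin fQ mf] by (auto simp: topspace_ocr)
  ultimately show ?thesis
    unfolding order_complex_realization_def[of Q] continuous_map_in_subtopology
    by (simp add: RS_def image_subset_iff_funcset)
qed



definition Lw :: "'a set \<Rightarrow> ('a \<Rightarrow> 'a \<Rightarrow> bool) \<Rightarrow> ('a \<Rightarrow> real) \<Rightarrow> 'a \<Rightarrow> real" where
  "Lw P lt w x = sum w {z\<in>P. lt z x}"

definition amt :: "'a set \<Rightarrow> ('a \<Rightarrow> 'a \<Rightarrow> bool) \<Rightarrow> real \<Rightarrow> ('a \<Rightarrow> real) \<Rightarrow> 'a \<Rightarrow> real" where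
  "amt P lt t w x = min (w x) (max 0 (1 - t - Lw P lt w x))"

definition Hh :: "'a set \<Rightarrow> ('a \<Rightarrow> 'a \<Rightarrow> bool) \<Rightarrow> ('a \<Rightarrow> 'b) \<Rightarrow> ('a \<Rightarrow> 'b) \<Rightarrow> real \<times> ('a \<Rightarrow> real) \<Rightarrow> 'b \<Rightarrow> real" where
  "Hh P lt f g p = (\<lambda>v. sum (amt P lt (fst p) (snd p)) {x\<in>P. f x = v}
        + sum (\<lambda>x. snd p x - amt P lt (fst p) (snd p) x) {x\<in>P. g x = v})"

lemma Lw_nonneg: "w \<in> RS P lt \<Longrightarrow> 0 \<le> Lw P lt w x"
  unfolding Lw_def by (intro sum_nonneg) (auto simp: RS_nonneg)

lemma Lw_bound:
  assumes fin: "finite P" and irr: "\<forall>x\<in>P. \<not> lt x x" and w: "w \<in> RS P lt" and x: "x \<in> P"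
  shows "Lw P lt w x + w x \<le> 1"
proof -
  have "Lw P lt w x + w x = sum w (insert x {z\<in>P. lt z x})"
    unfolding Lw_def using fin irr x by (subst sum.insert) auto
  also have "\<dots> \<le> sum w P"
    using x RS_nonneg[OF w] by (intro sum_mono2[OF fin]) auto
  finally show ?thesis using RS_sum[OF fin w] by simp
qed

lemma Lw_mono:
  assumes fin: "finite P" and irr: "\<forall>x\<in>P. \<not> lt x x"
    and tr: "\<forall>x\<in>P. \<forall>y\<in>P. \<forall>z\<in>P. lt x y \<longrightarrow> lt y z \<longrightarrow> lt x z"
    and w: "w \<in> RS P lt" and x: "x \<in> P" and y: "y \<in> P" and yx: "lt y x"
  shows "Lw P lt w y + w y \<le> Lw P lt w x"
proof -
  have "Lw P lt w y + w y = sum w (insert y {z\<in>P. lt z y})"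
    unfolding Lw_def using fin irr y by (subst sum.insert) auto
  also have "\<dots> \<le> sum w {z\<in>P. lt z x}"
  proof (rule sum_mono2)
    show "finite {z\<in>P. lt z x}" using fin by simp
    show "insert y {z \<in> P. lt z y} \<subseteq> {z \<in> P. lt z x}" using tr x y yx by blast
  qed (use RS_nonneg[OF w] in auto)
  finally show ?thesis unfolding Lw_def .
qed

lemma amt_nonneg: "w \<in> RS P lt \<Longrightarrow> 0 \<le> amt P lt t w x"
  unfolding amt_def by (auto simp: RS_nonneg)

lemma amt_le: "amt P lt t w x \<le> w x"
  unfolding amt_def by auto

lemma amt_0: "finite P \<Longrightarrow> \<forall>x\<in>P. \<not> lt x x \<Longrightarrow> w \<in> RS P lt \<Longrightarrow> x \<in> P \<Longrightarrow> amt P lt 0 w x = w x"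
  using Lw_bound[of P lt w x] unfolding amt_def by auto

lemma amt_1: "w \<in> RS P lt \<Longrightarrow> amt P lt 1 w x = 0"
  using Lw_nonneg[of w P lt x] RS_nonneg[of w P lt x] unfolding amt_def by auto

lemma cont_snd_proj:
  "continuous_map (prod_topology X (order_complex_realization P lt)) euclideanreal (\<lambda>p. snd p x)"
proof -
  have "continuous_map (order_complex_realization P lt) euclideanreal (\<lambda>w. w x)"
    unfolding order_complex_realization_def by (rule cont_proj_sub)
  then show ?thesis using continuous_map_snd continuous_map_compose[of _ _ snd] by (force simp: o_def)
qed

lemma cont_fst_real:
  "continuous_map (prod_topology (top_of_set (S::real set)) Y) euclideanreal fst"
  using continuous_map_fst continuous_map_from_subtopology continuous_map_into_fulltopology
  by (metis continuous_map_subtopology_fst subtopology_Times topspace_euclidean topspace_subtopology)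

lemma homotopic_push:
  assumes fin: "finite P" and irr: "\<forall>x\<in>P. \<not> lt x x"
    and tr: "\<forall>x\<in>P. \<forall>y\<in>P. \<forall>z\<in>P. lt x y \<longrightarrow> lt y z \<longrightarrow> lt x z"
    and tr': "\<forall>x\<in>Q. \<forall>y\<in>Q. \<forall>z\<in>Q. lt' x y \<longrightarrow> lt' y z \<longrightarrow> lt' x z"
    and fQ: "f ` P \<subseteq> Q" and gQ: "g ` P \<subseteq> Q"
    and mf: "monoP P lt lt' f" and mg: "monoP P lt lt' g"
    and fg: "\<forall>x\<in>P. f x = g x \<or> lt' (f x) (g x)"
  shows "homotopic_with (\<lambda>_. True) (order_complex_realization P lt) (order_complex_realization Q lt')
           (push P f) (push P g)"
proof -
  let ?X = "prod_topology (top_of_set {0..1::real}) (order_complex_realization P lt)"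
  have mem: "Hh P lt f g (t, w) \<in> RS Q lt'" if t: "t \<in> {0..1}" and w: "w \<in> RS P lt" for t w
  proof -
    let ?a = "amt P lt t w"
    let ?H = "Hh P lt f g (t, w)"
    have Hd: "?H v = sum ?a {x\<in>P. f x = v} + sum (\<lambda>x. w x - ?a x) {x\<in>P. g x = v}" for v
      by (simp add: Hh_def)
    show ?thesis
    proof (rule RS_intro[where V="f ` P \<union> g ` P"])
      show "finite (f ` P \<union> g ` P)" using fin by simp
      show "0 \<le> ?H v" for v unfolding Hd
        by (intro add_nonneg_nonneg sum_nonneg) (auto simp: amt_nonneg[OF w] amt_le)
      show "?H v \<noteq> 0 \<Longrightarrow> v \<in> f ` P \<union> g ` P" for v
      proof (rule ccontr)
        assume a: "?H v \<noteq> 0" "v \<notin> f ` P \<union> g ` P"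
        then have "{x\<in>P. f x = v} = {}" "{x\<in>P. g x = v} = {}" by auto
        with a(1) show False by (simp add: Hd)
      qed
      show "f ` P \<union> g ` P \<subseteq> Q" using fQ gQ by auto
      have "sum ?H (f ` P \<union> g ` P) = sum (\<lambda>v. sum ?a {x\<in>P. f x = v}) (f ` P \<union> g ` P)
             + sum (\<lambda>v. sum (\<lambda>x. w x - ?a x) {x\<in>P. g x = v}) (f ` P \<union> g ` P)"
        unfolding Hd by (simp add: sum.distrib)
      also have "\<dots> = sum ?a P + sum (\<lambda>x. w x - ?a x) P"
        using sum.group[OF fin, of "f ` P \<union> g ` P" f ?a] sum.group[OF fin, of "f ` P \<union> g ` P" g "\<lambda>x. w x - ?a x"]
          fin by auto
      also have "\<dots> = sum w P" by (simp add: sum_subtractf)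
      finally show "sum ?H (f ` P \<union> g ` P) = 1" using RS_sum[OF fin w] by simp
      show "v1 = v2 \<or> lt' v1 v2 \<or> lt' v2 v1" if v1: "?H v1 \<noteq> 0" and v2: "?H v2 \<noteq> 0" for v1 v2
      proof -
        have cases: "(\<exists>x\<in>P. f x = v \<and> w x \<noteq> 0 \<and> Lw P lt w x < 1 - t)
                   \<or> (\<exists>x\<in>P. g x = v \<and> w x \<noteq> 0 \<and> 1 - t < Lw P lt w x + w x)" if "?H v \<noteq> 0" for v
        proof -
          have "sum ?a {x\<in>P. f x = v} \<noteq> 0 \<or> sum (\<lambda>x. w x - ?a x) {x\<in>P. g x = v} \<noteq> 0"
            using that unfolding Hd by auto
          then show ?thesis
          proof
            assume "sum ?a {x\<in>P. f x = v} \<noteq> 0"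
            then obtain x where x: "x \<in> P" "f x = v" "?a x \<noteq> 0" by (auto dest!: sum_nz_ex)
            then have "w x \<noteq> 0" "Lw P lt w x < 1 - t"
              using RS_nonneg[OF w, of x] unfolding amt_def by (auto simp: min_def max_def split: if_splits)
            then show ?thesis using x by blast
          next
            assume "sum (\<lambda>x. w x - ?a x) {x\<in>P. g x = v} \<noteq> 0"
            then obtain x where x: "x \<in> P" "g x = v" "w x - ?a x \<noteq> 0" by (auto dest!: sum_nz_ex)
            then have "w x \<noteq> 0" "1 - t < Lw P lt w x + w x"
              using RS_nonneg[OF w, of x] unfolding amt_def by (auto simp: min_def max_def split: if_splits)
            then show ?thesis using x by blast
          qed
        qed
        have mix: "u1 = u2 \<or> lt' u1 u2 \<or> lt' u2 u1"
          if x1: "x1 \<in> P" "f x1 = u1" "w x1 \<noteq> 0" "Lw P lt w x1 < 1 - t"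
          and x2: "x2 \<in> P" "g x2 = u2" "w x2 \<noteq> 0" "1 - t < Lw P lt w x2 + w x2" for x1 x2 u1 u2
        proof -
          have "x1 = x2 \<or> lt x1 x2 \<or> lt x2 x1" using RS_chain[OF w x1(3) x2(3)] .
          moreover have "\<not> lt x2 x1"
            using Lw_mono[OF fin irr tr w x1(1) x2(1)] x1 x2 by auto
          moreover have "lt x1 x2 \<Longrightarrow> ?thesis"
          proof -
            assume l: "lt x1 x2"
            have A: "f x1 = f x2 \<or> lt' (f x1) (f x2)" using mf x1 x2 l unfolding monoP_def by blast
            have B: "f x2 = g x2 \<or> lt' (f x2) (g x2)" using fg x2 by blast
            have "f x1 \<in> Q" "f x2 \<in> Q" "g x2 \<in> Q" using fQ gQ x1 x2 by auto
            then show ?thesis using A B tr' x1 x2 by metis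
          qed
          moreover have "x1 = x2 \<Longrightarrow> ?thesis" using fg x1 x2 by auto
          ultimately show ?thesis by blast
        qed
        have ff: "u1 = u2 \<or> lt' u1 u2 \<or> lt' u2 u1"
          if "x1 \<in> P" "h x1 = u1" "w x1 \<noteq> 0" "x2 \<in> P" "h x2 = u2" "w x2 \<noteq> 0" "monoP P lt lt' h"
          for x1 x2 u1 u2 h
        proof -
          have "x1 = x2 \<or> lt x1 x2 \<or> lt x2 x1" using RS_chain[OF w that(3) that(6)] .
          then show ?thesis using that unfolding monoP_def by metis
        qed
        show ?thesis using cases[OF v1] cases[OF v2]
          apply (elim disjE bexE conjE)
             apply (meson ff mf)
            apply (meson mix)
           apply (metis mix)
          apply (metis ff mg)
          done
      qed
    qed
  qed
  have cont: "continuous_map ?X (order_complex_realization Q lt') (Hh P lt f g)"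
  proof -
    have "continuous_map ?X (powertop_real UNIV) (Hh P lt f g)"
      unfolding continuous_map_componentwise_UNIV Hh_def amt_def Lw_def
      by (intro allI continuous_map_sum continuous_intros cont_snd_proj cont_fst_real)
         (use fin in auto)
    moreover have "Hh P lt f g ` topspace ?X \<subseteq> RS Q lt'"
      using mem by (auto simp: topspace_ocr)
    ultimately show ?thesis
      unfolding order_complex_realization_def[of Q] continuous_map_in_subtopology
      by (simp add: RS_def image_subset_iff_funcset)
  qed
  have e0: "Hh P lt f g (0, w) = push P f w" if "w \<in> RS P lt" for w
    unfolding Hh_def push_def using amt_0[OF fin irr that] by (auto intro!: ext sum.neutral)
  have e1: "Hh P lt f g (1, w) = push P g w" if "w \<in> RS P lt" for w
    unfolding Hh_def push_def using amt_1[OF that] by auto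
  show ?thesis
    by (subst homotopic_with) (use cont e0 e1 in \<open>auto simp: topspace_ocr intro!: exI[where x="Hh P lt f g"]\<close>)
qed



lemma push_comp:
  assumes finP: "finite P" and finQ: "finite Q" and fQ: "f ` P \<subseteq> Q"
  shows "push Q g (push P f w) = push P (g \<circ> f) w"
proof
  fix v
  have "push Q g (push P f w) v = sum (\<lambda>y. sum w {x\<in>P. f x = y}) {y\<in>Q. g y = v}"
    by (simp add: push_def)
  also have "\<dots> = sum (\<lambda>y. sum w {x\<in>{x\<in>P. g (f x) = v}. f x = y}) {y\<in>Q. g y = v}"
    by (intro sum.cong) auto
  also have "\<dots> = sum w {x\<in>P. g (f x) = v}"
  proof (rule sum.group)
    show "finite {y \<in> Q. g y = v}" using finQ by simp
    show "finite {x \<in> P. g (f x) = v}"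
      using finP by simp
    show "f ` {x \<in> P. g (f x) = v} \<subseteq> {y \<in> Q. g y = v}" using fQ by auto
  qed
  finally show "push Q g (push P f w) v = push P (g \<circ> f) w v" by (simp add: push_def)
qed

lemma push_id: "w \<in> RS P lt \<Longrightarrow> push P id w = w"
proof
  fix v assume w: "w \<in> RS P lt"
  show "push P id w v = w v"
  proof (cases "v \<in> P")
    case True
    then have "{x\<in>P. id x = v} = {v}" by auto
    then show ?thesis by (simp add: push_def)
  next
    case False
    then have "{x\<in>P. id x = v} = {}" by auto
    then show ?thesis using RS_zero[OF w False] by (simp add: push_def)
  qed
qed

definition sorder :: "'a set \<Rightarrow> ('a \<Rightarrow> 'a \<Rightarrow> bool) \<Rightarrow> bool" where
  "sorder P lt \<longleftrightarrow> (\<forall>x\<in>P. \<not> lt x x) \<and> (\<forall>x\<in>P. \<forall>y\<in>P. \<forall>z\<in>P. lt x y \<longrightarrow> lt y z \<longrightarrow> lt x z)"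

lemma monoP_comp:
  assumes mf: "monoP P lt lt' f" and mg: "monoP Q lt' lt'' g" and fQ: "f ` P \<subseteq> Q"
  shows "monoP P lt lt'' (g \<circ> f)"
  unfolding monoP_def
proof (intro ballI impI)
  fix x y assume a: "x \<in> P" "y \<in> P" "lt x y"
  then have "f x = f y \<or> lt' (f x) (f y)" "f x \<in> Q" "f y \<in> Q" using mf fQ unfolding monoP_def by auto
  then show "(g \<circ> f) x = (g \<circ> f) y \<or> lt'' ((g \<circ> f) x) ((g \<circ> f) y)"
    using mg unfolding monoP_def by auto
qed

lemma monoP_id: "monoP P lt lt id"
  unfolding monoP_def by auto

lemma monoP_const: "monoP P lt lt' (\<lambda>_. z)"
  unfolding monoP_def by auto

lemma homotopic_push':
  assumes "finite P" "sorder P lt" "sorder Q lt'" "f ` P \<subseteq> Q" "g ` P \<subseteq> Q"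
    "monoP P lt lt' f" "monoP P lt lt' g" "\<forall>x\<in>P. f x = g x \<or> lt' (f x) (g x)"
  shows "homotopic_with (\<lambda>_. True) (order_complex_realization P lt) (order_complex_realization Q lt')
           (push P f) (push P g)"
proof -
  have a: "\<forall>x\<in>P. \<not> lt x x" "\<forall>x\<in>P. \<forall>y\<in>P. \<forall>z\<in>P. lt x y \<longrightarrow> lt y z \<longrightarrow> lt x z"
    using assms(2) unfolding sorder_def by blast+
  have b: "\<forall>x\<in>Q. \<forall>y\<in>Q. \<forall>z\<in>Q. lt' x y \<longrightarrow> lt' y z \<longrightarrow> lt' x z"
    using assms(3) unfolding sorder_def by blast
  show ?thesis by (rule homotopic_push[OF assms(1) a b assms(4-8)])
qed

lemma hequiv_retract:
  assumes finP: "finite P" and finQ: "finite Q" and sP: "sorder P lt" and sQ: "sorder Q lt'"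
    and iQ: "i ` Q \<subseteq> P" and cP: "c ` P \<subseteq> Q"
    and mi: "monoP Q lt' lt i" and mc: "monoP P lt lt' c"
    and ci: "\<forall>y\<in>Q. c (i y) = y" and ic: "\<forall>x\<in>P. i (c x) = x \<or> lt (i (c x)) x"
  shows "order_complex_realization P lt homotopy_equivalent_space order_complex_realization Q lt'"
  unfolding homotopy_equivalent_space_def
proof (intro exI conjI)
  show "continuous_map (order_complex_realization P lt) (order_complex_realization Q lt') (push P c)"
    by (rule push_cont[OF finP cP mc])
  show "continuous_map (order_complex_realization Q lt') (order_complex_realization P lt) (push Q i)"
    by (rule push_cont[OF finQ iQ mi])
  have icP: "(i \<circ> c) ` P \<subseteq> P" using iQ cP by auto
  have h: "homotopic_with (\<lambda>_. True) (order_complex_realization P lt) (order_complex_realization P lt)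
           (push P (i \<circ> c)) (push P id)"
    by (rule homotopic_push'[OF finP sP sP icP]) (use monoP_comp[OF mc mi cP] monoP_id ic in auto)
  show "homotopic_with (\<lambda>_. True) (order_complex_realization P lt) (order_complex_realization P lt)
           (push Q i \<circ> push P c) id"
    by (rule homotopic_with_eq[OF h]) (auto simp: topspace_ocr push_comp[OF finP finQ cP] push_id)
  have e: "(push P c \<circ> push Q i) w = id w" if "w \<in> RS Q lt'" for w
  proof -
    have "(push P c \<circ> push Q i) w = push Q (c \<circ> i) w" by (simp add: push_comp[OF finQ finP iQ])
    also have "\<dots> = push Q id w" unfolding push_def using ci by (intro ext sum.cong) auto
    finally show ?thesis using push_id[OF that] by simp
  qed
  show "homotopic_with (\<lambda>_. True) (order_complex_realization Q lt') (order_complex_realization Q lt')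
           (push P c \<circ> push Q i) id"
    by (rule homotopic_with_equal)
       (use e continuous_map_compose[OF push_cont[OF finQ iQ mi] push_cont[OF finP cP mc]] in \<open>auto simp: topspace_ocr\<close>)
qed

lemma hequiv_contract:
  assumes finP: "finite P" and sP: "sorder P lt" and z: "z \<in> P" and cP: "c ` P \<subseteq> P"
    and mc: "monoP P lt lt c" and cle: "\<forall>x\<in>P. c x = x \<or> lt (c x) x"
    and cz: "\<forall>x\<in>P. c x = z \<or> lt (c x) z"
  shows "order_complex_realization P lt homotopy_equivalent_space (discrete_topology {()})"
proof -
  let ?X = "order_complex_realization P lt"
  define e where "e = (\<lambda>v. if v = z then 1 else 0::real)"
  have eRS: "e \<in> RS P lt"
    by (rule RS_intro[where V="{z}"]) (auto simp: e_def z split: if_splits)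
  have h1: "homotopic_with (\<lambda>_. True) ?X ?X (push P id) (push P c)"
    by (rule homotopic_with_symD, rule homotopic_push'[OF finP sP sP cP])
       (use monoP_id mc cle in auto)
  have h2: "homotopic_with (\<lambda>_. True) ?X ?X (push P c) (push P (\<lambda>_. z))"
    by (rule homotopic_push'[OF finP sP sP cP]) (use monoP_const mc cz z in auto)
  have h: "homotopic_with (\<lambda>_. True) ?X ?X (push P id) (push P (\<lambda>_. z))"
    by (rule homotopic_with_trans[OF h1 h2])
  have pz: "push P (\<lambda>_. z) w = e" if "w \<in> RS P lt" for w
    unfolding push_def e_def using RS_sum[OF finP that] by auto
  show ?thesis
    unfolding homotopy_equivalent_space_def
  proof (intro exI conjI)
    show "continuous_map ?X (discrete_topology {()}) (\<lambda>_. ())" by simp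
    show "continuous_map (discrete_topology {()}) ?X (\<lambda>_. e)" using eRS by (simp add: topspace_ocr)
    show "homotopic_with (\<lambda>_. True) ?X ?X ((\<lambda>_. e) \<circ> (\<lambda>_. ())) id"
      by (rule homotopic_with_symD, rule homotopic_with_eq[OF h]) (auto simp: topspace_ocr push_id pz)
    show "homotopic_with (\<lambda>_. True) (discrete_topology {()}) (discrete_topology {()}) ((\<lambda>_. ()) \<circ> (\<lambda>_. e)) id"
      by (rule homotopic_with_equal) auto
  qed
qed



definition nf :: "nat \<Rightarrow> nat \<Rightarrow> nat \<times> nat \<Rightarrow> nat \<times> nat" where
  "nf p q x = (fst x + snd x div q * p, snd x mod q)"

lemma gen_nf: "gen_rel p q x y \<Longrightarrow> 0 < q \<Longrightarrow> nf p q x = nf p q y"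
  by (auto simp: gen_rel_def nf_def padd_def)

lemma lcong_nf: assumes "lcong p q x y" "0 < q" shows "nf p q x = nf p q y"
  using assms(1) unfolding lcong_def
proof (induct rule: equivclp_induct)
  case base then show ?case by simp
next
  case (step y z) then show ?case using gen_nf[of p q y z] gen_nf[of p q z y] assms(2) by auto
qed

lemma lcong_refl: "lcong p q x x"
  by (simp add: lcong_def)

lemma lcong_sym: "lcong p q x y \<Longrightarrow> lcong p q y x"
  unfolding lcong_def by (rule equivclp_sym)

lemma lcong_trans: "lcong p q x y \<Longrightarrow> lcong p q y z \<Longrightarrow> lcong p q x z"
  unfolding lcong_def by (rule equivclp_trans)

lemma lcong_shift: "lcong p q (m + k * p, n) (m, n + k * q)"
proof (induct k arbitrary: m n)
  case 0 then show ?case by (simp add: lcong_refl)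
next
  case (Suc k)
  have "lcong p q (m + Suc k * p, n) ((m + p) + k * p, n)" by (simp add: lcong_refl add_ac)
  moreover have "lcong p q ((m + p) + k * p, n) (m + p, n + k * q)" by (rule Suc)
  moreover have "gen_rel p q (m + p, n + k * q) (m, n + k * q + q)"
    unfolding gen_rel_def padd_def by (rule exI[of _ "(m, n + k*q)"]) simp
  then have "lcong p q (m + p, n + k * q) (m, n + Suc k * q)"
    unfolding lcong_def by (auto simp: add_ac)
  ultimately show ?case by (meson lcong_trans)
qed

lemma lcong_nf_self: "0 < q \<Longrightarrow> lcong p q x (nf p q x)"
proof -
  assume q: "0 < q"
  obtain m n where x: "x = (m, n)" by force
  have "lcong p q (m + (n div q) * p, n mod q) (m, n mod q + (n div q) * q)" by (rule lcong_shift)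
  moreover have "n mod q + (n div q) * q = n" by simp
  ultimately have "lcong p q (nf p q x) x" by (simp add: x nf_def)
  then show ?thesis by (rule lcong_sym)
qed

lemma lcong_iff: assumes q: "0 < q" shows "lcong p q x y \<longleftrightarrow> nf p q x = nf p q y"
proof
  assume "lcong p q x y" then show "nf p q x = nf p q y" using lcong_nf q by blast
next
  assume e: "nf p q x = nf p q y"
  have "lcong p q x (nf p q x)" by (rule lcong_nf_self[OF q])
  moreover have "lcong p q (nf p q y) y" by (rule lcong_sym, rule lcong_nf_self[OF q])
  ultimately show "lcong p q x y" using e lcong_trans by metis
qed

lemma lcls_eq_iff: "0 < q \<Longrightarrow> lcls p q x = lcls p q y \<longleftrightarrow> nf p q x = nf p q y"
proof
  assume q: "0 < q" and e: "lcls p q x = lcls p q y"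
  have "y \<in> lcls p q y" by (simp add: lcls_def lcong_refl)
  then have "y \<in> lcls p q x" using e by simp
  then show "nf p q x = nf p q y" using q by (simp add: lcls_def lcong_iff)
next
  assume q: "0 < q" and e: "nf p q x = nf p q y"
  show "lcls p q x = lcls p q y" unfolding lcls_def
    by (rule Collect_cong) (simp add: lcong_iff[OF q] e)
qed

lemma nf_nf: "0 < q \<Longrightarrow> nf p q (nf p q x) = nf p q x"
  by (auto simp: nf_def)

lemma nf_padd: "0 < q \<Longrightarrow> nf p q (padd x y) = nf p q (padd (nf p q x) y)"
proof -
  assume q: "0 < q"
  obtain a b c d where "x = (a, b)" "y = (c, d)" by force
  moreover have "(b + d) div q = b div q + (b mod q + d) div q"
    by (simp add: div_add1_eq[of b d q] div_add1_eq[of "b mod q" d q])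
  moreover have "(b mod q + d) mod q = (b + d) mod q" by (simp add: mod_add_left_eq)
  ultimately show ?thesis by (simp add: nf_def padd_def algebra_simps)
qed

lemma padd_comm: "padd x y = padd y x" by (simp add: padd_def add.commute)
lemma padd_assoc: "padd (padd x y) z = padd x (padd y z)" by (simp add: padd_def add.assoc)
lemma padd_0: "padd (0, 0) x = x" by (simp add: padd_def)

lemma nf_padd2: "0 < q \<Longrightarrow> nf p q x = nf p q x' \<Longrightarrow> nf p q y = nf p q y' \<Longrightarrow>
   nf p q (padd x y) = nf p q (padd x' y')"
proof -
  assume q: "0 < q" and e1: "nf p q x = nf p q x'" and e2: "nf p q y = nf p q y'"
  have "nf p q (padd x y) = nf p q (padd (nf p q x) y)" by (rule nf_padd[OF q])
  also have "\<dots> = nf p q (padd x' y)" using nf_padd[OF q, where x=x' and y=y] e1 by simp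
  also have "\<dots> = nf p q (padd y x')" by (simp add: padd_comm)
  also have "\<dots> = nf p q (padd (nf p q y) x')" by (rule nf_padd[OF q])
  also have "\<dots> = nf p q (padd y' x')" using nf_padd[OF q, where x=y' and y=x'] e2 by simp
  finally show ?thesis by (simp add: padd_comm)
qed

lemma lcls_mem: "0 < q \<Longrightarrow> y \<in> lcls p q x \<longleftrightarrow> nf p q x = nf p q y"
  by (simp add: lcls_def lcong_iff)

lemma ladd_lcls: "0 < q \<Longrightarrow> ladd p q (lcls p q x) (lcls p q y) = lcls p q (padd x y)"
proof (intro set_eqI iffI)
  fix z assume q: "0 < q"
  assume "z \<in> ladd p q (lcls p q x) (lcls p q y)"
  then obtain x' y' where "nf p q x = nf p q x'" "nf p q y = nf p q y'" "nf p q (padd x' y') = nf p q z"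
    unfolding ladd_def using q by (auto simp: lcls_mem lcong_iff)
  then show "z \<in> lcls p q (padd x y)" using q nf_padd2[where x=x and x'=x' and y=y and y'=y'] by (simp add: lcls_mem)
next
  fix z assume q: "0 < q"
  assume "z \<in> lcls p q (padd x y)"
  then have "lcong p q (padd x y) z" by (simp add: lcls_def)
  moreover have "x \<in> lcls p q x" "y \<in> lcls p q y" by (simp_all add: lcls_def lcong_refl)
  ultimately show "z \<in> ladd p q (lcls p q x) (lcls p q y)" unfolding ladd_def by blast
qed

lemma Lam_obtain: "X \<in> Lam p q \<Longrightarrow> (\<And>x. X = lcls p q x \<Longrightarrow> thesis) \<Longrightarrow> thesis"
  unfolding Lam_def by auto

lemma lcls_in_Lam: "lcls p q x \<in> Lam p q" by (simp add: Lam_def)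

lemma lle_lcls: "0 < q \<Longrightarrow> lle p q (lcls p q x) (lcls p q y) \<longleftrightarrow> (\<exists>z. nf p q (padd x z) = nf p q y)"
  unfolding lle_def Lam_def by (auto simp: ladd_lcls lcls_eq_iff)



lemma tau_0: "tau p r 0 = 0" by (simp add: tau_def)

lemma tau_shift: "0 < p \<Longrightarrow> tau p r (a + k * p) = tau p r a + k * r"
  by (simp add: tau_def algebra_simps)

lemma tau_Suc: assumes p: "0 < p" shows "tau p r a \<le> tau p r (Suc a)"
proof (cases "Suc (a mod p) = p")
  case True
  then have "Suc a div p = Suc (a div p)" "Suc a mod p = 0"
    using p by (simp_all add: div_Suc mod_Suc)
  moreover have "min (a mod p) (r - 1) \<le> r" by simp
  ultimately show ?thesis by (simp add: tau_def)
next
  case False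
  then have "Suc a div p = a div p" "Suc a mod p = Suc (a mod p)"
    using p by (simp_all add: div_Suc mod_Suc)
  then show ?thesis by (simp add: tau_def)
qed

lemma tau_mono: "0 < p \<Longrightarrow> a \<le> b \<Longrightarrow> tau p r a \<le> tau p r b"
  using tau_Suc[of p r] by (rule lift_Suc_mono_le)

lemma tau_inv: "2 \<le> p \<Longrightarrow> tau p 2 (tau 2 p k) = k"
proof -
  assume p: "2 \<le> p"
  have "k mod 2 \<le> 1" by simp
  then have m: "min (k mod 2) (p - 1) = k mod 2" using p by (intro min_absorb1) linarith
  have d: "(k div 2 * p + k mod 2) div p = k div 2" "(k div 2 * p + k mod 2) mod p = k mod 2"
    using p by (simp_all add: div_add1_eq mod_less)
  show ?thesis unfolding tau_def m d by simp
qed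

lemma tau_round: "0 < p \<Longrightarrow> tau 2 p (tau p 2 m) = m div p * p + min (m mod p) 1"
proof -
  assume p: "0 < p"
  have "min (m mod p) 1 \<le> 1" by simp
  then have "(m div p * 2 + min (m mod p) 1) div 2 = m div p" "(m div p * 2 + min (m mod p) 1) mod 2 = min (m mod p) 1"
    by simp_all
  moreover have "min (min (m mod p) 1) (p - 1) = min (m mod p) 1"
  proof (cases "m mod p = 0")
    case False
    have "m mod p < p" using p by simp
    then have "min (m mod p) 1 \<le> p - 1" using False by linarith
    then show ?thesis by (rule min_absorb1)
  qed simp
  ultimately show ?thesis by (simp add: tau_def)
qed

lemma tau_round_le: "0 < p \<Longrightarrow> tau 2 p (tau p 2 m) \<le> m"
proof -
  assume p: "0 < p"
  have "m div p * p + min (m mod p) 1 \<le> m div p * p + m mod p" by (rule add_left_mono) simp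
  also have "\<dots> = m" by (rule div_mult_mod_eq)
  finally show ?thesis by (subst tau_round[OF p])
qed

lemma tau_zero: assumes "tau p 2 m = 0" shows "m = 0"
proof -
  have "m div p = 0" "min (m mod p) 1 = 0" using assms by (simp_all add: tau_def)
  then have "m div p = 0" "m mod p = 0" by (auto simp: min_def split: if_splits)
  then show ?thesis using div_mult_mod_eq[of m p] by simp
qed



lemma nf_add_zero:
  assumes p: "0 < p" and q: "0 < q" and e: "nf p q (padd x z) = nf p q x"
  shows "z = (0, 0)"
proof -
  obtain a b c d where xz: "x = (a, b)" "z = (c, d)" by force
  have e1: "a + c + (b + d) div q * p = a + b div q * p" and e2: "(b + d) mod q = b mod q"
    using e by (simp_all add: xz nf_def padd_def)
  have "b div q \<le> (b + d) div q" by (simp add: div_le_mono)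
  then have "b div q * p \<le> (b + d) div q * p" by (rule mult_le_mono1)
  then have c0: "c = 0" and "(b + d) div q * p = b div q * p" using e1 by linarith+
  then have dd: "(b + d) div q = b div q" using p by simp
  have "b + d = (b + d) div q * q + (b + d) mod q" by simp
  also have "\<dots> = b div q * q + b mod q" using dd e2 by simp
  also have "\<dots> = b" by simp
  finally have "d = 0" by simp
  then show ?thesis using c0 xz by simp
qed

lemma padd_00: "padd x (0, 0) = x" by (simp add: padd_def)

lemma lle_refl_l: "0 < q \<Longrightarrow> lle p q (lcls p q x) (lcls p q x)"
  by (simp add: lle_lcls) (metis padd_00)

lemma nf_trans_aux:
  assumes q: "0 < q" and e1: "nf p q (padd x z1) = nf p q y" and e2: "nf p q (padd y z2) = nf p q w"
  shows "nf p q (padd x (padd z1 z2)) = nf p q w"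
proof -
  have "nf p q (padd x (padd z1 z2)) = nf p q (padd (padd x z1) z2)" by (simp add: padd_assoc)
  also have "\<dots> = nf p q (padd (nf p q (padd x z1)) z2)" by (rule nf_padd[OF q])
  also have "\<dots> = nf p q (padd (nf p q y) z2)" using e1 by simp
  also have "\<dots> = nf p q (padd y z2)" by (rule nf_padd[OF q, symmetric])
  finally show ?thesis using e2 by simp
qed

lemma lle_trans:
  assumes q: "0 < q" and X: "X \<in> Lam p q" and Y: "Y \<in> Lam p q" and Z: "Z \<in> Lam p q"
    and xy: "lle p q X Y" and yz: "lle p q Y Z"
  shows "lle p q X Z"
proof -
  obtain x y w where d: "X = lcls p q x" "Y = lcls p q y" "Z = lcls p q w"
    using X Y Z by (auto elim!: Lam_obtain)
  obtain z1 where e1: "nf p q (padd x z1) = nf p q y" using xy d q by (auto simp: lle_lcls)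
  obtain z2 where e2: "nf p q (padd y z2) = nf p q w" using yz d q by (auto simp: lle_lcls)
  show ?thesis unfolding d lle_lcls[OF q] using nf_trans_aux[OF q e1 e2] by blast
qed

lemma lle_antisym:
  assumes p: "0 < p" and q: "0 < q" and X: "X \<in> Lam p q" and Y: "Y \<in> Lam p q"
    and xy: "lle p q X Y" and yx: "lle p q Y X"
  shows "X = Y"
proof -
  obtain x y where d: "X = lcls p q x" "Y = lcls p q y"
    using X Y by (auto elim!: Lam_obtain)
  obtain z1 where e1: "nf p q (padd x z1) = nf p q y" using xy d q by (auto simp: lle_lcls)
  obtain z2 where e2: "nf p q (padd y z2) = nf p q x" using yx d q by (auto simp: lle_lcls)
  have "padd z1 z2 = (0, 0)" by (rule nf_add_zero[OF p q nf_trans_aux[OF q e1 e2]])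
  then have "z1 = (0, 0)" by (cases z1, cases z2) (simp add: padd_def)
  then have "nf p q x = nf p q y" using e1 by (simp add: padd_00)
  then show ?thesis using d q by (simp add: lcls_eq_iff)
qed

lemma sorder_lam:
  assumes p: "0 < p" and q: "0 < q" and S: "S \<subseteq> Lam p q"
  shows "sorder S (lless p q)"
  unfolding sorder_def lless_def
proof (intro conjI ballI impI)
  fix x y z assume xyz: "x \<in> S" "y \<in> S" "z \<in> S"
    and a: "lle p q x y \<and> x \<noteq> y" "lle p q y z \<and> y \<noteq> z"
  have L: "x \<in> Lam p q" "y \<in> Lam p q" "z \<in> Lam p q" using xyz S by auto
  show "lle p q x z" using lle_trans[OF q L] a by blast
  show "x \<noteq> z"
  proof
    assume "x = z"
    then have "lle p q y x" using a by simp
    then show False using lle_antisym[OF p q L(1,2)] a by blast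
  qed
qed simp

lemma zero_lle: "0 < q \<Longrightarrow> X \<in> Lam p q \<Longrightarrow> lle p q (lzero p q) X"
  by (auto elim!: Lam_obtain simp: lzero_def lle_lcls padd_0 simp del: prod.collapse intro!: exI)

lemma fst_nf_le: "fst (nf p q x) \<le> fst (nf p q (padd x z))"
proof -
  have "snd x div q \<le> (snd x + snd z) div q" by (simp add: div_le_mono)
  then have A: "snd x div q * p \<le> (snd x + snd z) div q * p" by (rule mult_le_mono1)
  show ?thesis unfolding nf_def padd_def fst_conv snd_conv using A by linarith
qed

lemma finite_below:
  assumes q: "0 < q" and L: "L \<in> Lam p q"
  shows "finite {X \<in> Lam p q. lle p q X L}"
proof -
  obtain l where l: "L = lcls p q l" using L by (auto elim!: Lam_obtain)
  have "{X \<in> Lam p q. lle p q X L} \<subseteq> lcls p q ` ({0..fst (nf p q l)} \<times> {0..<q})"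
  proof
    fix X assume "X \<in> {X \<in> Lam p q. lle p q X L}"
    then obtain x where x: "X = lcls p q x" and le: "lle p q X L" by (auto elim!: Lam_obtain)
    obtain z where e: "nf p q (padd x z) = nf p q l" using le x l q by (auto simp: lle_lcls)
    have X2: "X = lcls p q (nf p q x)" using x q by (simp add: lcls_eq_iff nf_nf)
    have "fst (nf p q x) \<le> fst (nf p q l)" using fst_nf_le[of p q x z] e by simp
    moreover have "snd (nf p q x) < q" using q by (simp add: nf_def)
    ultimately show "X \<in> lcls p q ` ({0..fst (nf p q l)} \<times> {0..<q})"
      using X2 by (intro image_eqI[of _ _ "nf p q x"]) (auto simp: mem_Times_iff)
  qed
  then show ?thesis by (rule finite_subset) simp
qed



lemma tm_nf:
  assumes p: "0 < p" and q: "0 < q" and s: "0 < s"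
  shows "lcls r s (tau p r (fst x), tau q s (snd x))
       = lcls r s (tau p r (fst (nf p q x)), tau q s (snd (nf p q x)))"
proof -
  obtain a b where x: "x = (a, b)" by force
  define k where "k = b div q"
  have b: "b = b mod q + k * q" by (simp add: k_def)
  have t2: "tau q s b = tau q s (b mod q) + k * s" using tau_shift[OF q, of s "b mod q" k] b by simp
  have t1: "tau p r (a + k * p) = tau p r a + k * r" by (rule tau_shift[OF p])
  have "lcong r s (tau p r a + k * r, tau q s (b mod q)) (tau p r a, tau q s (b mod q) + k * s)"
    by (rule lcong_shift)
  then have "nf r s (tau p r a + k * r, tau q s (b mod q)) = nf r s (tau p r a, tau q s (b mod q) + k * s)"
    using lcong_iff[OF s] by blast
  then show ?thesis using s x t1 t2 by (simp add: lcls_eq_iff nf_def[of p q] k_def)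
qed

lemma tm_lcls:
  assumes p: "0 < p" and q: "0 < q" and s: "0 < s"
  shows "trans_map p q r s (lcls p q x) = lcls r s (tau p r (fst x), tau q s (snd x))"
proof -
  define y where "y = (SOME y. y \<in> lcls p q x)"
  have "y \<in> lcls p q x" unfolding y_def by (rule someI[of _ x]) (simp add: lcls_def lcong_refl)
  then have e: "nf p q x = nf p q y" using q by (simp add: lcls_mem)
  have "trans_map p q r s (lcls p q x) = lcls r s (tau p r (fst y), tau q s (snd y))"
    by (simp add: trans_map_def y_def Let_def)
  also have "\<dots> = lcls r s (tau p r (fst x), tau q s (snd x))"
    using tm_nf[OF p q s, of r y] tm_nf[OF p q s, of r x] e by simp
  finally show ?thesis .
qed

lemma tm_Lam: "trans_map p q r s X \<in> Lam r s"
  by (simp add: trans_map_def Let_def lcls_in_Lam)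

lemma tm_zero: "0 < p \<Longrightarrow> 0 < q \<Longrightarrow> 0 < s \<Longrightarrow> trans_map p q r s (lzero p q) = lzero r s"
  by (simp add: lzero_def tm_lcls tau_0)

lemma tm_mono:
  assumes p: "0 < p" and q: "0 < q" and s: "0 < s"
    and X: "X \<in> Lam p q" and Y: "Y \<in> Lam p q" and le: "lle p q X Y"
  shows "lle r s (trans_map p q r s X) (trans_map p q r s Y)"
proof -
  obtain x y where d: "X = lcls p q x" "Y = lcls p q y" using X Y by (auto elim!: Lam_obtain)
  obtain z where e: "nf p q (padd x z) = nf p q y" using le d q by (auto simp: lle_lcls)
  then have Y2: "Y = lcls p q (padd x z)" using d q by (simp add: lcls_eq_iff)
  let ?a = "tau p r (fst x)" and ?b = "tau q s (snd x)"
  let ?a' = "tau p r (fst x + fst z)" and ?b' = "tau q s (snd x + snd z)"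
  have m: "?a \<le> ?a'" "?b \<le> ?b'" using tau_mono[OF p] tau_mono[OF q] by auto
  have "padd (?a, ?b) (?a' - ?a, ?b' - ?b) = (?a', ?b')" using m by (simp add: padd_def)
  then show ?thesis unfolding d(1) Y2 tm_lcls[OF p q s] lle_lcls[OF s]
    by (intro exI[of _ "(?a' - ?a, ?b' - ?b)"]) (simp add: padd_def)
qed

lemma tm_ci:
  assumes p: "2 \<le> p" and q: "2 \<le> q" and Y: "Y \<in> Lam 2 2"
  shows "trans_map p q 2 2 (trans_map 2 2 p q Y) = Y"
proof -
  obtain y where d: "Y = lcls 2 2 y" using Y by (auto elim!: Lam_obtain)
  have p0: "0 < p" and q0: "0 < q" using p q by auto
  show ?thesis unfolding d
    by (simp add: tm_lcls p0 q0 tau_inv[OF p] tau_inv[OF q])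
qed

lemma tm_ic:
  assumes p: "2 \<le> p" and q: "2 \<le> q" and X: "X \<in> Lam p q"
  shows "lle p q (trans_map 2 2 p q (trans_map p q 2 2 X)) X"
proof -
  obtain x where d: "X = lcls p q x" using X by (auto elim!: Lam_obtain)
  have p0: "0 < p" and q0: "0 < q" using p q by auto
  let ?a = "tau 2 p (tau p 2 (fst x))" and ?b = "tau 2 q (tau q 2 (snd x))"
  have m: "?a \<le> fst x" "?b \<le> snd x" using tau_round_le p0 q0 by auto
  have "padd (?a, ?b) (fst x - ?a, snd x - ?b) = x" using m by (simp add: padd_def)
  then show ?thesis unfolding d
    by (simp add: tm_lcls p0 q0 lle_lcls) (metis)
qed

lemma tm_c_zero:
  assumes p: "2 \<le> p" and q: "2 \<le> q" and X: "X \<in> Lam p q"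
    and z: "trans_map p q 2 2 X = lzero 2 2"
  shows "X = lzero p q"
proof -
  obtain x where d: "X = lcls p q x" using X by (auto elim!: Lam_obtain)
  have p0: "0 < p" and q0: "0 < q" using p q by auto
  have "nf 2 2 (tau p 2 (fst x), tau q 2 (snd x)) = nf 2 2 (0, 0)"
    using z unfolding d lzero_def by (simp add: tm_lcls p0 q0 lcls_eq_iff)
  then have "tau p 2 (fst x) = 0" "tau q 2 (snd x) = 0" by (auto simp: nf_def)
  then have "fst x = 0" "snd x = 0" using tau_zero by blast+
  then have "x = (0, 0)" by (simp add: prod_eq_iff)
  then show ?thesis by (simp add: d lzero_def)
qed



lemma monoP_of_lle:
  assumes "\<forall>x\<in>S. \<forall>y\<in>S. lle p q x y \<longrightarrow> lle r s (f x) (f y)"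
  shows "monoP S (lless p q) (lless r s) f"
  using assms unfolding monoP_def lless_def by blast

theorem theorem2p5:
  fixes p q :: nat and L :: "(nat \<times> nat) set"
  assumes "p \<ge> 2" and "q \<ge> 2"
    and "L \<in> Lam p q" and "L \<noteq> lzero p q"
  shows "(trans_map 2 2 p q (trans_map p q 2 2 L) = L \<longrightarrow>
            frobenius_complex p q L homotopy_equivalent_space
            frobenius_complex 2 2 (trans_map p q 2 2 L))
       \<and> (trans_map 2 2 p q (trans_map p q 2 2 L) \<noteq> L \<longrightarrow>
            frobenius_complex p q L homotopy_equivalent_space
            (discrete_topology {()}))"
proof -
  have p2: "2 \<le> p" and q2: "2 \<le> q" and L: "L \<in> Lam p q" and L0: "L \<noteq> lzero p q" using assms by auto
  have p0: "0 < p" and q0: "0 < q" using p2 q2 by auto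
  have t0: "(0::nat) < 2" by simp
  define c where "c = trans_map p q 2 2"
  define i where "i = trans_map 2 2 p q"
  define P where "P = lopen p q (lzero p q) L"
  define Q where "Q = lopen 2 2 (lzero 2 2) (c L)"
  have cL: "c L \<in> Lam 2 2" by (simp add: c_def tm_Lam)
  have cLam: "c x \<in> Lam 2 2" for x by (simp add: c_def tm_Lam)
  have iLam: "i y \<in> Lam p q" for y by (simp add: i_def tm_Lam)
  have PL: "P \<subseteq> Lam p q" and QL: "Q \<subseteq> Lam 2 2" by (auto simp: P_def Q_def lopen_def)
  have finP: "finite P"
    by (rule finite_subset[OF _ finite_below[OF q0 L]]) (auto simp: P_def lopen_def lless_def)
  have finQ: "finite Q"
    by (rule finite_subset[OF _ finite_below[OF t0 cL]]) (auto simp: Q_def lopen_def lless_def)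
  have sP: "sorder P (lless p q)" by (rule sorder_lam[OF p0 q0 PL])
  have sQ: "sorder Q (lless 2 2)" by (rule sorder_lam[OF t0 t0 QL])
  have cmono: "lle 2 2 (c x) (c y)" if "x \<in> Lam p q" "y \<in> Lam p q" "lle p q x y" for x y
    unfolding c_def by (rule tm_mono[OF p0 q0 t0 that])
  have imono: "lle p q (i x) (i y)" if "x \<in> Lam 2 2" "y \<in> Lam 2 2" "lle 2 2 x y" for x y
    unfolding i_def by (rule tm_mono[OF t0 t0 q0 that])
  have ci: "c (i y) = y" if "y \<in> Lam 2 2" for y unfolding c_def i_def by (rule tm_ci[OF p2 q2 that])
  have ic: "lle p q (i (c x)) x" if "x \<in> Lam p q" for x unfolding c_def i_def by (rule tm_ic[OF p2 q2 that])
  have c0: "c (lzero p q) = lzero 2 2" unfolding c_def by (rule tm_zero[OF p0 q0 t0])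
  have i0: "i (lzero 2 2) = lzero p q" unfolding i_def by (rule tm_zero[OF t0 t0 q0])
  have cz: "x = lzero p q" if "x \<in> Lam p q" "c x = lzero 2 2" for x
    using tm_c_zero[OF p2 q2 that(1)] that(2) by (simp add: c_def)
  have z2L: "lzero 2 2 \<in> Lam 2 2" and zL: "lzero p q \<in> Lam p q" by (simp_all add: lzero_def lcls_in_Lam)
  have antis: "x = y" if "x \<in> Lam p q" "y \<in> Lam p q" "lle p q x y" "lle p q y x" for x y
    by (rule lle_antisym[OF p0 q0 that])
  have Pmem: "x \<in> P \<longleftrightarrow> x \<in> Lam p q \<and> lle p q (lzero p q) x \<and> x \<noteq> lzero p q \<and> lle p q x L \<and> x \<noteq> L" for x
    by (auto simp: P_def lopen_def lless_def)
  have Qmem: "y \<in> Q \<longleftrightarrow> y \<in> Lam 2 2 \<and> lle 2 2 (lzero 2 2) y \<and> y \<noteq> lzero 2 2 \<and> lle 2 2 y (c L) \<and> y \<noteq> c L" for y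
    by (auto simp: Q_def lopen_def lless_def)
  have mc: "monoP P (lless p q) (lless 2 2) c"
    by (rule monoP_of_lle) (use PL cmono in blast)
  have cnz: "c x \<noteq> lzero 2 2" if "x \<in> P" for x
    using cz that Pmem by blast
  show ?thesis
  proof (intro conjI impI)
    assume hfix: "trans_map 2 2 p q (trans_map p q 2 2 L) = L"
    then have fixL: "i (c L) = L" by (simp add: c_def i_def)
    have iQ: "i ` Q \<subseteq> P"
    proof
      fix x assume "x \<in> i ` Q"
      then obtain y where y: "y \<in> Q" "x = i y" by blast
      have yL: "y \<in> Lam 2 2" "y \<noteq> lzero 2 2" "lle 2 2 y (c L)" "y \<noteq> c L" using y Qmem by auto
      have "i y \<noteq> lzero p q" using ci[OF yL(1)] yL(2) c0 by metis
      moreover have "lle p q (i y) L" using imono[OF yL(1) cL yL(3)] fixL by simp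
      moreover have "i y \<noteq> L" using ci[OF yL(1)] yL(4) by metis
      ultimately show "x \<in> P" using y iLam zero_lle[OF q0] Pmem by blast
    qed
    have cP: "c ` P \<subseteq> Q"
    proof
      fix y assume "y \<in> c ` P"
      then obtain x where x: "x \<in> P" "y = c x" by blast
      have xL: "x \<in> Lam p q" "lle p q x L" "x \<noteq> L" using x Pmem by auto
      have "lle 2 2 (c x) (c L)" by (rule cmono[OF xL(1) L xL(2)])
      moreover have "c x \<noteq> c L"
      proof
        assume "c x = c L"
        then have "lle p q L x" using ic[OF xL(1)] fixL by simp
        then show False using antis[OF xL(1) L xL(2)] xL(3) by simp
      qed
      ultimately show "y \<in> Q" using x cnz cLam zero_lle[OF t0] Qmem by blast
    qed
    have mi: "monoP Q (lless 2 2) (lless p q) i"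
      by (rule monoP_of_lle) (use QL imono in blast)
    have "order_complex_realization P (lless p q) homotopy_equivalent_space order_complex_realization Q (lless 2 2)"
    proof (rule hequiv_retract[OF finP finQ sP sQ iQ cP mi mc])
      show "\<forall>y\<in>Q. c (i y) = y" using ci QL by blast
      show "\<forall>x\<in>P. i (c x) = x \<or> lless p q (i (c x)) x" using ic PL by (auto simp: lless_def)
    qed
    then show "frobenius_complex p q L homotopy_equivalent_space frobenius_complex 2 2 (trans_map p q 2 2 L)"
      by (simp add: frobenius_complex_def P_def Q_def c_def)
  next
    assume nfix: "trans_map 2 2 p q (trans_map p q 2 2 L) \<noteq> L"
    then have nfixL: "i (c L) \<noteq> L" by (simp add: c_def i_def)
    define z where "z = i (c L)"
    have zP: "z \<in> P"
    proof -
      have "z \<noteq> lzero p q"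
      proof
        assume "z = lzero p q"
        then have "c L = lzero 2 2" using ci[OF cL] c0 by (simp add: z_def)
        then show False using cz[OF L] L0 by blast
      qed
      then show ?thesis using iLam zero_lle[OF q0] ic[OF L] nfixL Pmem by (auto simp: z_def)
    qed
    have cP: "(i \<circ> c) ` P \<subseteq> P"
    proof
      fix y assume "y \<in> (i \<circ> c) ` P"
      then obtain x where x: "x \<in> P" "y = i (c x)" by auto
      have xL: "x \<in> Lam p q" "lle p q x L" "x \<noteq> L" using x Pmem by auto
      have "i (c x) \<noteq> lzero p q"
      proof
        assume "i (c x) = lzero p q"
        then have "c x = lzero 2 2" using ci[OF cLam] c0 by metis
        then show False using cnz[OF x(1)] by blast
      qed
      moreover have "lle p q (i (c x)) L" by (rule lle_trans[OF q0 iLam xL(1) L ic[OF xL(1)] xL(2)])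
      moreover have "i (c x) \<noteq> L"
      proof
        assume "i (c x) = L"
        then have "lle p q L x" using ic[OF xL(1)] by simp
        then show False using antis[OF xL(1) L xL(2)] xL(3) by simp
      qed
      ultimately show "y \<in> P" using x iLam zero_lle[OF q0] Pmem by blast
    qed
    have mc': "monoP P (lless p q) (lless p q) (i \<circ> c)"
    proof (rule monoP_of_lle, intro ballI impI)
      fix x y assume xy: "x \<in> P" "y \<in> P" "lle p q x y"
      then have "x \<in> Lam p q" "y \<in> Lam p q" using PL by auto
      then show "lle p q ((i \<circ> c) x) ((i \<circ> c) y)"
        using imono[OF cLam cLam cmono[OF _ _ xy(3)]] by simp
    qed
    have "order_complex_realization P (lless p q) homotopy_equivalent_space discrete_topology {()}"
    proof (rule hequiv_contract[OF finP sP zP cP mc'])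
      show "\<forall>x\<in>P. (i \<circ> c) x = x \<or> lless p q ((i \<circ> c) x) x" using ic PL by (auto simp: lless_def)
      show "\<forall>x\<in>P. (i \<circ> c) x = z \<or> lless p q ((i \<circ> c) x) z"
        using Pmem cmono imono cLam L cL by (auto simp: z_def lless_def)
    qed
    then show "frobenius_complex p q L homotopy_equivalent_space discrete_topology {()}"
      by (simp add: frobenius_complex_def P_def)
  qed
qed


end
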